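(* Let $q$ be a power of a prime $p$, let $n\ge 2$, and let $X=\{F=0\}\subset\mathbb{P}^n$ be a hypersurface of degree $d$ over $\mathbb{F}_q$ such that $d\leq q+1$ and $F$ is not a $p$-th power. Then for every $1\le r\le n-1$ there exists a linear subspace $H\subset\mathbb{P}^n$ defined over $\mathbb{F}_q$ of dimension $r$ such that $H\not\subset X$ and the restriction $F|_H$ is not a $p$-th power.
   Context: $F\in\mathbb{F}_q[x_0,\dots,x_n]$ is a nonzero homogeneous polynomial. "$F$ is a $p$-th power" means $F=G^p$ for some polynomial $G$ (over $\overline{\mathbb{F}_q}$), equivalently all partial derivatives of $F$ vanish. *)

theory Defs
  imports "HOL-Library.Poly_Mapping" "HOL-Library.Cardinality"
begin

text \<open>Multivariate polynomials over a coefficient ring 'a: finitely supported maps from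
  monomials (finitely supported exponent vectors nat =>0 nat; variable x_i has index i)
  to coefficients.\<close>

type_synonym 'a mpoly = "(nat \<Rightarrow>\<^sub>0 nat) \<Rightarrow>\<^sub>0 'a"

definition mconst :: "'a::comm_semiring_1 \<Rightarrow> 'a mpoly" where
  "mconst c = Poly_Mapping.single 0 c"

definition mvar :: "nat \<Rightarrow> ('a::comm_semiring_1) mpoly" where
  "mvar i = Poly_Mapping.single (Poly_Mapping.single i 1) 1"

definition vars_within :: "('a::zero) mpoly \<Rightarrow> nat \<Rightarrow> bool" where
  "vars_within F n \<longleftrightarrow> (\<forall>m::nat \<Rightarrow>\<^sub>0 nat. m \<in> Poly_Mapping.keys F \<longrightarrow> Poly_Mapping.keys m \<subseteq> {..n})"

definition homogeneous :: "('a::zero) mpoly \<Rightarrow> nat \<Rightarrow> bool" where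
  "homogeneous F d \<longleftrightarrow> (\<forall>m::nat \<Rightarrow>\<^sub>0 nat. m \<in> Poly_Mapping.keys F \<longrightarrow> (\<Sum>i\<in>Poly_Mapping.keys m. Poly_Mapping.lookup m i) = d)"

definition is_pth_power :: "('a::field) mpoly \<Rightarrow> bool" where
  "is_pth_power F \<longleftrightarrow> (\<exists>G. F = G ^ CHAR('a))"

text \<open>Restriction of F to the linear subspace H parametrised by the (n+1)\<times>(r+1) matrix A:
  F|_H (y_0,...,y_r) = F(A y), i.e. x_i is replaced by \<Sum>_{j\<le>r} A i j * y_j.\<close>
definition lin_subst :: "('a::comm_semiring_1) mpoly \<Rightarrow> (nat \<Rightarrow> nat \<Rightarrow> 'a) \<Rightarrow> nat \<Rightarrow> 'a mpoly" where
  "lin_subst F A r =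
     (\<Sum>m\<in>Poly_Mapping.keys F. mconst (Poly_Mapping.lookup F m) *
        (\<Prod>i\<in>Poly_Mapping.keys m. (\<Sum>j\<le>r. mconst (A i j) * mvar j) ^ Poly_Mapping.lookup m i))"

text \<open>The columns A(-,0),...,A(-,r) of the (n+1)\<times>(r+1) matrix A are linearly independent in
  'a^(n+1); their span is then an (r+1)-dimensional subspace, i.e. a projective r-plane
  in P^n defined over 'a.\<close>
definition indep_columns :: "(nat \<Rightarrow> nat \<Rightarrow> 'a::field) \<Rightarrow> nat \<Rightarrow> nat \<Rightarrow> bool" where
  "indep_columns A n r \<longleftrightarrow>
     (\<forall>c::nat \<Rightarrow> 'a. (\<forall>i\<le>n. (\<Sum>j\<le>r. A i j * c j) = 0) \<longrightarrow> (\<forall>j\<le>r. c j = 0))"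

end

theory Submission
  imports Defs "HOL-Computational_Algebra.Polynomial" "HOL-Computational_Algebra.Primes" "HOL-Library.FuncSet"
begin


definition mon :: "(nat \<Rightarrow> 'b::comm_ring_1) \<Rightarrow> (nat \<Rightarrow>\<^sub>0 nat) \<Rightarrow> 'b" where
  "mon \<phi> m = (\<Prod>i\<in>Poly_Mapping.keys m. \<phi> i ^ Poly_Mapping.lookup m i)"

definition ev :: "(nat \<Rightarrow> 'a::comm_ring_1 poly) \<Rightarrow> 'a mpoly \<Rightarrow> 'a poly" where
  "ev \<phi> P = (\<Sum>m\<in>Poly_Mapping.keys P. [:Poly_Mapping.lookup P m:] * mon \<phi> m)"

lemma mon_superset:
  assumes "finite V" "Poly_Mapping.keys m \<subseteq> V"
  shows "mon \<phi> m = (\<Prod>i\<in>V. \<phi> i ^ Poly_Mapping.lookup m i)"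
  unfolding mon_def
  by (rule prod.mono_neutral_left) (use assms in \<open>auto simp: in_keys_iff\<close>)

lemma mon_add: "mon \<phi> (m1 + m2) = mon \<phi> m1 * mon \<phi> m2"
proof -
  let ?V = "Poly_Mapping.keys m1 \<union> Poly_Mapping.keys m2"
  have "mon \<phi> (m1 + m2) = (\<Prod>i\<in>?V. \<phi> i ^ Poly_Mapping.lookup (m1 + m2) i)"
    by (rule mon_superset) (auto simp: keys_add)
  also have "\<dots> = (\<Prod>i\<in>?V. \<phi> i ^ Poly_Mapping.lookup m1 i) * (\<Prod>i\<in>?V. \<phi> i ^ Poly_Mapping.lookup m2 i)"
    by (simp add: lookup_add power_add prod.distrib)
  also have "\<dots> = mon \<phi> m1 * mon \<phi> m2"
    by (subst (1 2) mon_superset[where V="?V"]) auto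
  finally show ?thesis .
qed

lemma mon_zero [simp]: "mon \<phi> 0 = 1"
  by (simp add: mon_def)


lemma ev_superset:
  assumes "finite S" "Poly_Mapping.keys P \<subseteq> S"
  shows "ev \<phi> P = (\<Sum>m\<in>S. [:Poly_Mapping.lookup P m:] * mon \<phi> m)"
  unfolding ev_def
  by (rule sum.mono_neutral_left) (use assms in \<open>auto simp: in_keys_iff\<close>)

lemma ev_zero [simp]: "ev \<phi> 0 = 0"
  by (simp add: ev_def)

lemma ev_add: "ev \<phi> (P + Q) = ev \<phi> P + ev \<phi> Q"
proof -
  let ?S = "Poly_Mapping.keys P \<union> Poly_Mapping.keys Q"
  have "ev \<phi> (P + Q) = (\<Sum>m\<in>?S. [:Poly_Mapping.lookup (P + Q) m:] * mon \<phi> m)"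
    by (rule ev_superset) (auto simp: keys_add)
  also have "\<dots> = (\<Sum>m\<in>?S. [:Poly_Mapping.lookup P m:] * mon \<phi> m) + (\<Sum>m\<in>?S. [:Poly_Mapping.lookup Q m:] * mon \<phi> m)"
    by (simp add: lookup_add sum.distrib smult_add_left)
  also have "\<dots> = ev \<phi> P + ev \<phi> Q"
    by (subst (1 2) ev_superset[where S="?S"]) auto
  finally show ?thesis .
qed

lemma ev_sum: "ev \<phi> (\<Sum>x\<in>S. f x) = (\<Sum>x\<in>S. ev \<phi> (f x))"
  by (induction S rule: infinite_finite_induct) (auto simp: ev_add)

lemma ev_single: "ev \<phi> (Poly_Mapping.single m c) = [:c:] * mon \<phi> m"
  by (cases "c = 0") (auto simp: ev_def)

lemma pm_decomp: "P = (\<Sum>m\<in>Poly_Mapping.keys P. Poly_Mapping.single m (Poly_Mapping.lookup P m))"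
proof (rule poly_mapping_eqI)
  fix k
  show "Poly_Mapping.lookup P k = Poly_Mapping.lookup (\<Sum>m\<in>Poly_Mapping.keys P. Poly_Mapping.single m (Poly_Mapping.lookup P m)) k"
    by (simp add: lookup_sum lookup_single when_def in_keys_iff)
qed

lemma ev_mult: "ev \<phi> (P * Q) = ev \<phi> P * ev \<phi> Q"
proof -
  have "P * Q = (\<Sum>m\<in>Poly_Mapping.keys P. Poly_Mapping.single m (Poly_Mapping.lookup P m)) *
                (\<Sum>m'\<in>Poly_Mapping.keys Q. Poly_Mapping.single m' (Poly_Mapping.lookup Q m'))"
    by (subst (1) pm_decomp, subst (1) pm_decomp[of Q]) (rule refl)
  also have "\<dots> = (\<Sum>m\<in>Poly_Mapping.keys P. \<Sum>m'\<in>Poly_Mapping.keys Q.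
       Poly_Mapping.single (m + m') (Poly_Mapping.lookup P m * Poly_Mapping.lookup Q m'))"
    by (simp add: sum_product mult_single)
  finally have "ev \<phi> (P * Q) = (\<Sum>m\<in>Poly_Mapping.keys P. \<Sum>m'\<in>Poly_Mapping.keys Q.
       [:Poly_Mapping.lookup P m * Poly_Mapping.lookup Q m':] * mon \<phi> (m + m'))"
    by (simp add: ev_sum ev_single)
  also have "\<dots> = ev \<phi> P * ev \<phi> Q"
    by (simp add: ev_def sum_product mon_add smult_smult mult.commute)
  finally show ?thesis .
qed

lemma ev_one [simp]: "ev \<phi> 1 = 1"
  by (simp add: ev_single flip: single_one)

lemma ev_prod: "ev \<phi> (\<Prod>x\<in>S. f x) = (\<Prod>x\<in>S. ev \<phi> (f x))"
  by (induction S rule: infinite_finite_induct) (auto simp: ev_mult)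

lemma ev_power: "ev \<phi> (P ^ k) = ev \<phi> P ^ k"
  by (induction k) (auto simp: ev_mult)

lemma ev_mconst [simp]: "ev \<phi> (mconst c) = [:c:]"
  by (simp add: mconst_def ev_single)

lemma ev_mvar [simp]: "ev \<phi> (mvar j) = \<phi> j"
  by (simp add: mvar_def ev_single mon_def)

lemma ev_lin_subst:
  "ev \<phi> (lin_subst F A r) = ev (\<lambda>i. \<Sum>j\<le>r. [:A i j:] * \<phi> j) F"
  by (simp only: lin_subst_def ev_sum ev_mult ev_prod ev_power ev_mconst ev_mvar) (simp add: ev_def mon_def)



lemma card_ge2: "CARD('a::{finite,field}) \<ge> 2"
proof -
  have "{0, 1} \<subseteq> (UNIV :: 'a set)" by auto
  hence "card {0, 1::'a} \<le> CARD('a)" using card_mono[of "UNIV::'a set" "{0,1::'a}"] by simp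
  thus ?thesis by simp
qed

lemma of_nat_card_zero: "of_nat CARD('a::{finite,field}) = (0::'a)"
proof -
  have "(\<Sum>y\<in>(UNIV::'a set). y + 1) = (\<Sum>y\<in>UNIV. y)"
    by (rule sum.reindex_bij_witness[of _ "\<lambda>y. y - 1" "\<lambda>y. y + 1"]) auto
  thus ?thesis by (simp add: sum.distrib)
qed

lemma ff_power_card_minus1:
  fixes x :: "'a::{finite,field}"
  assumes "x \<noteq> 0"
  shows "x ^ (CARD('a) - 1) = 1"
proof -
  have "(\<Prod>y\<in>UNIV-{0}. x * y) = (\<Prod>y\<in>UNIV-{0}. y)"
    by (rule prod.reindex_bij_witness[of _ "\<lambda>y. y / x" "\<lambda>y. x * y"]) (use assms in auto)
  moreover have "(\<Prod>y\<in>UNIV-{0}. x * y) = x ^ (CARD('a) - 1) * (\<Prod>y\<in>UNIV-{0}. y)"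
    by (simp add: prod.distrib card_Diff_subset)
  moreover have "(\<Prod>y\<in>UNIV-{0::'a}. y) \<noteq> 0" by simp
  ultimately show ?thesis by simp
qed

lemma card_minus1_eq: "CARD('a::{finite,field}) - 1 = CARD('a) - Suc 0" by simp

definition psum :: "nat \<Rightarrow> 'a::{finite,field}" where
  "psum j = (\<Sum>x\<in>UNIV. x ^ j)"

lemma psum_0: "psum 0 = (0::'a::{finite,field})"
  by (simp add: psum_def of_nat_card_zero)

lemma psum_top: "psum (CARD('a) - 1) = (-1::'a::{finite,field})"
proof -
  have q: "CARD('a) - 1 > 0" using card_ge2[where 'a='a] by simp
  have "psum (CARD('a) - 1) = (\<Sum>x\<in>UNIV-{0}. x ^ (CARD('a) - 1)) + (0::'a) ^ (CARD('a) - 1)"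
    unfolding psum_def using sum.remove[OF finite_class.finite_UNIV UNIV_I, where x=0 and g="\<lambda>x. x ^ (CARD('a) - 1)"]
    by (metis add.commute)
  also have "\<dots> = (\<Sum>x\<in>UNIV-{0::'a}. 1)"
    using q by (simp add: ff_power_card_minus1[unfolded card_minus1_eq])
  also have "\<dots> = of_nat (CARD('a) - 1)" by (simp add: card_Diff_subset)
  also have "\<dots> = of_nat CARD('a) - 1" using card_ge2[where 'a='a] by (simp add: of_nat_diff)
  finally show ?thesis by (simp add: of_nat_card_zero)
qed

lemma psum_small:
  assumes "j < CARD('a) - 1"
  shows "psum j = (0::'a::{finite,field})"
proof (cases "j = 0")
  case True thus ?thesis by (simp add: psum_0)
next
  case False
  define p :: "'a poly" where "p = monom 1 j + [:-1:]"
  have pj: "poly p x = x ^ j - 1" for x by (simp add: p_def poly_monom)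
  have dp: "degree p = j" using False unfolding p_def by (simp add: degree_add_eq_left degree_monom_eq)
  have "p \<noteq> 0" using False dp by auto
  hence "card {x. poly p x = 0} \<le> j" using card_poly_roots_bound dp by metis
  hence "card {x. poly p x = 0} < card (UNIV - {0::'a})"
    using assms by (simp add: card_Diff_subset)
  have "\<not> (UNIV - {0::'a}) \<subseteq> {x. poly p x = 0}"
  proof
    assume "UNIV - {0} \<subseteq> {x. poly p x = 0}"
    hence "card (UNIV-{0::'a}) \<le> card {x. poly p x = 0}"
      by (intro card_mono) (simp_all add: poly_roots_finite \<open>p \<noteq> 0\<close>)
    thus False using \<open>card {x. poly p x = 0} < card (UNIV - {0::'a})\<close> by simp
  qed
  then obtain b :: 'a where b: "b \<noteq> 0" "b ^ j \<noteq> 1" by (auto simp: pj)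
  have "psum j = (\<Sum>x\<in>UNIV. (b * x) ^ j)"
    unfolding psum_def
    by (rule sum.reindex_bij_witness[of _ "\<lambda>y. b * y" "\<lambda>y. y / b"]) (use b in auto)
  also have "\<dots> = b ^ j * psum j"
    by (simp add: psum_def power_mult_distrib sum_distrib_left)
  finally have "(b ^ j - 1) * psum j = 0" by (simp add: algebra_simps)
  thus ?thesis using b by simp
qed

lemma orth:
  fixes c :: "'t \<Rightarrow> 'a::{finite,field}" and \<mu> :: "'t \<Rightarrow> nat \<Rightarrow> nat"
  assumes T: "finite T" and inj: "inj_on \<mu> T"
    and deg: "\<And>t. t \<in> T \<Longrightarrow> (\<Sum>i\<le>n. \<mu> t i) = e"
    and out: "\<And>t i. t \<in> T \<Longrightarrow> i > n \<Longrightarrow> \<mu> t i = 0"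
    and t0: "t0 \<in> T" "c t0 \<noteq> 0" and small: "\<And>i. i \<le> n \<Longrightarrow> \<mu> t0 i < CARD('a)"
  shows "\<exists>a. (\<Sum>t\<in>T. c t * (\<Prod>i\<le>n. a i ^ \<mu> t i)) \<noteq> 0"
proof (rule ccontr)
  assume "\<not> ?thesis"
  hence Z: "\<And>a. (\<Sum>t\<in>T. c t * (\<Prod>i\<le>n. a i ^ \<mu> t i)) = 0" by auto
  define q where "q = CARD('a)"
  define P where "P = PiE {..n} (\<lambda>_. UNIV :: 'a set)"
  define E where "E t i = \<mu> t i + (q - 1 - \<mu> t0 i)" for t i
  have "0 = (\<Sum>a\<in>P. (\<Sum>t\<in>T. c t * (\<Prod>i\<le>n. a i ^ \<mu> t i)) * (\<Prod>i\<le>n. a i ^ (q - 1 - \<mu> t0 i)))"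
    by (simp add: Z)
  also have "\<dots> = (\<Sum>t\<in>T. c t * (\<Sum>a\<in>P. \<Prod>i\<le>n. a i ^ E t i))"
    by (simp add: E_def sum_distrib_right sum_distrib_left power_add prod.distrib mult_ac sum.swap[of _ P])
  also have "\<dots> = (\<Sum>t\<in>T. c t * (\<Prod>i\<le>n. psum (E t i)))"
    unfolding P_def psum_def by (simp add: prod_sum_PiE)
  also have "\<dots> = (\<Sum>t\<in>{t0}. c t * (\<Prod>i\<le>n. psum (E t i)))"
  proof (rule sum.mono_neutral_right)
    show "\<forall>t\<in>T - {t0}. c t * (\<Prod>i\<le>n. psum (E t i)) = 0"
    proof
      fix t assume t: "t \<in> T - {t0}"
      have "\<exists>i\<le>n. \<mu> t i < \<mu> t0 i"
      proof (rule ccontr)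
        assume "\<not> ?thesis"
        hence ge: "\<And>i. i \<le> n \<Longrightarrow> \<mu> t0 i \<le> \<mu> t i" by auto
        have "\<mu> t = \<mu> t0"
        proof (rule ccontr)
          assume "\<mu> t \<noteq> \<mu> t0"
          then obtain i where i: "\<mu> t i \<noteq> \<mu> t0 i" by auto
          have "i \<le> n" using i out t t0 by (metis DiffD1 not_le)
          have "\<mu> t0 i < \<mu> t i" using ge[OF \<open>i \<le> n\<close>] i by simp
          hence "(\<Sum>i\<le>n. \<mu> t0 i) < (\<Sum>i\<le>n. \<mu> t i)"
            using ge \<open>i \<le> n\<close> by (intro sum_strict_mono_ex1) auto
          thus False using deg t t0 by auto
        qed
        thus False using inj t t0 by (auto dest: inj_onD)
      qed
      then obtain i where i: "i \<le> n" "\<mu> t i < \<mu> t0 i" by auto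
      have "E t i < q - 1" using i small[of i] unfolding E_def q_def by linarith
      hence "psum (E t i) = (0::'a)" unfolding q_def by (rule psum_small)
      thus "c t * (\<Prod>i\<le>n. psum (E t i)) = 0" using i by (auto intro: prod_zero)
    qed
  qed (use T t0 in auto)
  also have "\<dots> = c t0 * (-1) ^ card {..n}"
  proof -
    have "E t0 i = q - 1" if "i \<le> n" for i using small[OF that] unfolding E_def q_def by simp
    hence "(\<Prod>i\<le>n. psum (E t0 i)) = (\<Prod>i\<le>n. (-1::'a))"
      by (intro prod.cong) (auto simp: q_def psum_top[unfolded card_minus1_eq])
    thus ?thesis by simp
  qed
  finally show False using t0 by simp
qed

lemma unit_case:
  fixes c :: "'t \<Rightarrow> 'a::{finite,field}" and \<mu> :: "'t \<Rightarrow> nat \<Rightarrow> nat"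
  assumes T: "finite T" and inj: "inj_on \<mu> T"
    and deg: "\<And>t. t \<in> T \<Longrightarrow> (\<Sum>i\<le>n. \<mu> t i) = e"
    and out: "\<And>t i. t \<in> T \<Longrightarrow> i > n \<Longrightarrow> \<mu> t i = 0"
    and t0: "t0 \<in> T" "c t0 \<noteq> 0" and j: "j \<le> n" and mt0: "\<mu> t0 = (\<lambda>i. if i = j then e else 0)"
  shows "\<exists>a. (\<Sum>t\<in>T. c t * (\<Prod>i\<le>n. a i ^ \<mu> t i)) \<noteq> 0"
proof -
  define a :: "nat \<Rightarrow> 'a" where "a i = (if i = j then 1 else 0)" for i
  have "(\<Sum>t\<in>T. c t * (\<Prod>i\<le>n. a i ^ \<mu> t i)) = (\<Sum>t\<in>{t0}. c t * (\<Prod>i\<le>n. a i ^ \<mu> t i))"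
  proof (rule sum.mono_neutral_right)
    show "\<forall>t\<in>T - {t0}. c t * (\<Prod>i\<le>n. a i ^ \<mu> t i) = 0"
    proof
      fix t assume t: "t \<in> T - {t0}"
      have "\<exists>i\<le>n. i \<noteq> j \<and> \<mu> t i \<noteq> 0"
      proof (rule ccontr)
        assume "\<not> ?thesis"
        hence z: "\<And>i. i \<le> n \<Longrightarrow> i \<noteq> j \<Longrightarrow> \<mu> t i = 0" by auto
        have "(\<Sum>i\<le>n. \<mu> t i) = (\<Sum>i\<in>{j}. \<mu> t i)"
          by (rule sum.mono_neutral_right) (use j z in auto)
        hence "\<mu> t j = e" using deg t by simp
        hence "\<mu> t = \<mu> t0" using z out t j by (auto simp: mt0 fun_eq_iff) (metis not_le)
        thus False using inj t t0 by (auto dest: inj_onD)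
      qed
      then obtain i where "i \<le> n" "i \<noteq> j" "\<mu> t i \<noteq> 0" by auto
      thus "c t * (\<Prod>i\<le>n. a i ^ \<mu> t i) = 0" by (auto intro!: prod_zero simp: a_def)
    qed
  qed (use T t0 in auto)
  also have "\<dots> = c t0"
  proof -
    have "(\<Prod>i\<le>n. a i ^ \<mu> t0 i) = 1" by (rule prod.neutral) (auto simp: a_def mt0)
    thus ?thesis by simp
  qed
  finally show ?thesis using t0 by (intro exI[of _ a]) auto
qed



lemma char_prime: "prime CHAR('a::{finite,field})"
  by (intro prime_CHAR_semidom finite_imp_CHAR_pos) simp

lemma char_mpoly: "CHAR('a::comm_ring_1 mpoly) = CHAR('a)"
proof (rule CHAR_eqI)
  show "of_nat CHAR('a) = (0::'a mpoly)"
    by (simp flip: single_of_nat)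
next
  fix x assume "of_nat x = (0::'a mpoly)"
  hence "Poly_Mapping.lookup (of_nat x :: 'a mpoly) 0 = 0" by simp
  hence "of_nat x = (0::'a)" by (simp add: lookup_of_nat)
  thus "CHAR('a) dvd x" by (simp add: of_nat_eq_0_iff_char_dvd)
qed

lemma lookup_pm_map: "Poly_Mapping.lookup (Poly_Mapping.map f m) k = (if Poly_Mapping.lookup m k = 0 then 0 else f (Poly_Mapping.lookup m k))"
  by (simp add: Poly_Mapping.map.rep_eq when_def)

lemma single_power:
  "Poly_Mapping.single (k :: nat \<Rightarrow>\<^sub>0 nat) (c::'a::comm_semiring_1) ^ n = Poly_Mapping.single (Poly_Mapping.map ((*) n) k) (c ^ n)"
proof (induction n)
  case 0
  have "Poly_Mapping.map ((*) 0) k = 0" by (rule poly_mapping_eqI) (simp add: lookup_pm_map)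
  thus ?case by (simp only: power_0 single_one)
next
  case (Suc n)
  have "k + Poly_Mapping.map ((*) n) k = Poly_Mapping.map ((*) (Suc n)) k"
    by (rule poly_mapping_eqI) (simp add: lookup_pm_map lookup_add)
  thus ?case using Suc by (simp only: power_Suc mult_single)
qed

lemma frob_surj: "\<exists>r::'a::{finite,field} \<Rightarrow> 'a. \<forall>c. r c ^ CHAR('a) = c"
proof -
  have "inj (\<lambda>x::'a. x ^ CHAR('a))"
  proof (rule injI)
    fix x y :: 'a assume "x ^ CHAR('a) = y ^ CHAR('a)"
    moreover have "((x - y) + y) ^ CHAR('a) = (x - y) ^ CHAR('a) + y ^ CHAR('a)"
      by (rule freshmans_dream[OF char_prime refl])
    ultimately have "(x - y) ^ CHAR('a) = 0" by simp
    thus "x = y" by simp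
  qed
  hence "surj (\<lambda>x::'a. x ^ CHAR('a))" by (simp add: finite_UNIV_inj_surj)
  thus ?thesis by (metis surj_f_inv_f)
qed

lemma pth_of_divisible:
  fixes F :: "('a::{finite,field}) mpoly"
  assumes "\<forall>m\<in>Poly_Mapping.keys F. \<forall>k. of_nat (Poly_Mapping.lookup m k) = (0::'a)"
  shows "is_pth_power F"
proof -
  define p where "p = CHAR('a)"
  obtain r :: "'a \<Rightarrow> 'a" where r: "\<And>c. r c ^ p = c" using frob_surj unfolding p_def by blast
  define G where "G = (\<Sum>m\<in>Poly_Mapping.keys F. Poly_Mapping.single (Poly_Mapping.map (\<lambda>x. x div p) m) (r (Poly_Mapping.lookup F m)))"
  have mm: "Poly_Mapping.map ((*) p) (Poly_Mapping.map (\<lambda>x. x div p) m) = m" if "m \<in> Poly_Mapping.keys F" for m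
  proof (rule poly_mapping_eqI)
    fix k
    have "p dvd Poly_Mapping.lookup m k" using assms that unfolding p_def by (simp add: of_nat_eq_0_iff_char_dvd)
    moreover have "p > 0" unfolding p_def using char_prime[where 'a='a] prime_gt_0_nat by blast
    ultimately show "Poly_Mapping.lookup (Poly_Mapping.map ((*) p) (Poly_Mapping.map (\<lambda>x. x div p) m)) k = Poly_Mapping.lookup m k"
      by (auto simp: lookup_pm_map elim!: dvdE)
  qed
  have "G ^ p = (\<Sum>m\<in>Poly_Mapping.keys F. Poly_Mapping.single (Poly_Mapping.map (\<lambda>x. x div p) m) (r (Poly_Mapping.lookup F m)) ^ p)"
    unfolding G_def by (rule freshmans_dream_sum) (simp_all add: char_mpoly p_def char_prime)
  also have "\<dots> = (\<Sum>m\<in>Poly_Mapping.keys F. Poly_Mapping.single m (Poly_Mapping.lookup F m))"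
    by (intro sum.cong refl) (simp add: single_power mm r)
  also have "\<dots> = F" by (rule pm_decomp[symmetric])
  finally show ?thesis unfolding is_pth_power_def p_def by metis
qed



lemma const_poly_power: "[:c:] ^ e = [:c ^ e:]"
  by (induction e) (auto simp: mult.commute)

lemma coeff1_mon:
  fixes a :: "nat \<Rightarrow> 'a::comm_ring_1"
  assumes "Poly_Mapping.keys m \<subseteq> {..n}" "k \<le> n"
  shows "coeff (mon (\<lambda>i. [:a i, if i = k then 1 else 0:]) m) 1 =
         of_nat (Poly_Mapping.lookup m k) * (\<Prod>i\<le>n. a i ^ (Poly_Mapping.lookup m i - (if i = k then 1 else 0)))"
proof -
  define e where "e = Poly_Mapping.lookup m k"
  define C where "C = (\<Prod>i\<in>{..n}-{k}. a i ^ Poly_Mapping.lookup m i)"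
  have "mon (\<lambda>i. [:a i, if i = k then 1 else 0:]) m = (\<Prod>i\<le>n. [:a i, if i = k then 1 else 0:] ^ Poly_Mapping.lookup m i)"
    by (rule mon_superset) (use assms in auto)
  also have "\<dots> = [:a k, 1:] ^ e * (\<Prod>i\<in>{..n}-{k}. [:a i, if i = k then 1 else 0:] ^ Poly_Mapping.lookup m i)"
    using assms by (subst prod.remove[of _ k]) (auto simp: e_def)
  also have "(\<Prod>i\<in>{..n}-{k}. [:a i, if i = k then 1 else 0:] ^ Poly_Mapping.lookup m i) = [:C:]"
    unfolding C_def by (simp add: const_poly_power prod_to_poly)
  finally have M: "mon (\<lambda>i. [:a i, if i = k then 1 else 0:]) m = [:a k, 1:] ^ e * [:C:]" .
  have R: "(\<Prod>i\<le>n. a i ^ (Poly_Mapping.lookup m i - (if i = k then 1 else 0))) = a k ^ (e - 1) * C"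
    using assms unfolding C_def e_def by (subst prod.remove[of _ k]) auto
  show ?thesis
  proof (cases "e = 0")
    case True
    thus ?thesis by (simp add: M R e_def[symmetric])
  next
    case False
    have "coeff ([:a k, 1:] ^ e) 1 = of_nat e * a k ^ (e - 1)"
      using coeff_linear_poly_power[of 1 e "a k" 1] False by simp
    thus ?thesis by (simp add: M R e_def[symmetric] mult.commute[of _ "[:C:]"] mult.assoc)
  qed
qed

lemma coeff1_ev:
  fixes F :: "'a::comm_ring_1 mpoly"
  assumes "vars_within F n" "k \<le> n"
  shows "coeff (ev (\<lambda>i. [:a i, if i = k then 1 else 0:]) F) 1 =
    (\<Sum>m\<in>Poly_Mapping.keys F. Poly_Mapping.lookup F m * of_nat (Poly_Mapping.lookup m k) *
       (\<Prod>i\<le>n. a i ^ (Poly_Mapping.lookup m i - (if i = k then 1 else 0))))"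
  unfolding ev_def coeff_sum
proof (intro sum.cong refl)
  fix m assume "m \<in> Poly_Mapping.keys F"
  hence "Poly_Mapping.keys m \<subseteq> {..n}" using assms(1) unfolding vars_within_def by auto
  from coeff1_mon[OF this assms(2), of a]
  show "coeff ([:Poly_Mapping.lookup F m:] * mon (\<lambda>i. [:a i, if i = k then 1 else 0:]) m) 1 =
    Poly_Mapping.lookup F m * of_nat (Poly_Mapping.lookup m k) *
       (\<Prod>i\<le>n. a i ^ (Poly_Mapping.lookup m i - (if i = k then 1 else 0)))"
    by (simp add: mult.assoc)
qed



lemma exists_point:
  fixes F :: "('a::{finite,field}) mpoly"
  assumes vw: "vars_within F n" and hom: "homogeneous F d" and dq: "d \<le> CARD('a) + 1"
    and np: "\<not> is_pth_power F"
  shows "\<exists>k a. k \<le> n \<and> (\<Sum>m\<in>Poly_Mapping.keys F. Poly_Mapping.lookup F m * of_nat (Poly_Mapping.lookup m k) *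
       (\<Prod>i\<le>n. a i ^ (Poly_Mapping.lookup m i - (if i = k then 1 else 0)))) \<noteq> 0"
proof -
  obtain m1 k where m1: "m1 \<in> Poly_Mapping.keys F" "of_nat (Poly_Mapping.lookup m1 k) \<noteq> (0::'a)"
    using pth_of_divisible[of F] np by blast
  have keysn: "Poly_Mapping.keys m \<subseteq> {..n}" if "m \<in> Poly_Mapping.keys F" for m
    using vw that unfolding vars_within_def by auto
  have "Poly_Mapping.lookup m1 k \<noteq> 0" using m1(2) by (metis of_nat_0)
  hence "k \<in> Poly_Mapping.keys m1" by (simp add: in_keys_iff)
  hence kn: "k \<le> n" using keysn[OF m1(1)] by auto
  define T where "T = {m \<in> Poly_Mapping.keys F. of_nat (Poly_Mapping.lookup m k) \<noteq> (0::'a)}"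
  define c where "c m = Poly_Mapping.lookup F m * of_nat (Poly_Mapping.lookup m k)" for m
  define \<mu> where "\<mu> (m :: nat \<Rightarrow>\<^sub>0 nat) (i::nat) = Poly_Mapping.lookup m i - (if i = k then 1 else 0)" for m i
  have Tfin: "finite T" unfolding T_def by simp
  have Tk: "Poly_Mapping.lookup m k \<ge> 1" if "m \<in> T" for m
    using that unfolding T_def by (cases "Poly_Mapping.lookup m k") auto
  have sumeq: "(\<Sum>m\<in>Poly_Mapping.keys F. c m * (\<Prod>i\<le>n. a i ^ \<mu> m i)) = (\<Sum>m\<in>T. c m * (\<Prod>i\<le>n. a i ^ \<mu> m i))" for a
    by (rule sum.mono_neutral_right) (auto simp: T_def c_def)
  have inj: "inj_on \<mu> T"
  proof (rule inj_onI)
    fix x y assume xy: "x \<in> T" "y \<in> T" "\<mu> x = \<mu> y"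
    show "x = y"
    proof (rule poly_mapping_eqI)
      fix i
      have "\<mu> x i = \<mu> y i" using xy by simp
      thus "Poly_Mapping.lookup x i = Poly_Mapping.lookup y i"
        using Tk[OF xy(1)] Tk[OF xy(2)] unfolding \<mu>_def by (cases "i = k") auto
    qed
  qed
  have out: "\<mu> m i = 0" if "m \<in> T" "i > n" for m i
  proof -
    have "i \<notin> Poly_Mapping.keys m" using keysn[of m] that unfolding T_def by auto
    thus ?thesis using that kn unfolding \<mu>_def by (auto simp: in_keys_iff)
  qed
  have deg: "(\<Sum>i\<le>n. \<mu> m i) = d - 1" if "m \<in> T" for m
  proof -
    have mF: "m \<in> Poly_Mapping.keys F" using that unfolding T_def by auto
    have "(\<Sum>i\<le>n. Poly_Mapping.lookup m i) = (\<Sum>i\<in>Poly_Mapping.keys m. Poly_Mapping.lookup m i)"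
      by (rule sum.mono_neutral_right) (use keysn[OF mF] in \<open>auto simp: in_keys_iff\<close>)
    also have "\<dots> = d" using hom mF unfolding homogeneous_def by auto
    finally have S: "(\<Sum>i\<le>n. Poly_Mapping.lookup m i) = d" .
    have "(\<Sum>i\<le>n. Poly_Mapping.lookup m i) = Poly_Mapping.lookup m k + (\<Sum>i\<in>{..n}-{k}. Poly_Mapping.lookup m i)"
      using kn by (subst sum.remove[of _ k]) auto
    moreover have "(\<Sum>i\<le>n. \<mu> m i) = (Poly_Mapping.lookup m k - 1) + (\<Sum>i\<in>{..n}-{k}. Poly_Mapping.lookup m i)"
      using kn unfolding \<mu>_def by (subst sum.remove[of _ k]) auto
    ultimately show ?thesis using S Tk[OF that] by simp
  qed
  have m1T: "m1 \<in> T" using m1 unfolding T_def by auto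
  have cne: "c m \<noteq> 0" if "m \<in> T" for m using that unfolding T_def c_def by (auto simp: in_keys_iff)
  have "\<exists>a. (\<Sum>m\<in>T. c m * (\<Prod>i\<le>n. a i ^ \<mu> m i)) \<noteq> 0"
  proof (cases "\<exists>t0\<in>T. \<forall>i\<le>n. \<mu> t0 i < CARD('a)")
    case True
    then obtain t0 where "t0 \<in> T" "\<forall>i\<le>n. \<mu> t0 i < CARD('a)" by auto
    thus ?thesis using orth[where T=T and \<mu>=\<mu> and n=n and e="d-1" and c=c, OF Tfin inj deg out, of t0] cne by auto
  next
    case False
    then obtain j where j: "j \<le> n" "\<mu> m1 j \<ge> CARD('a)" using m1T by (auto simp: not_less)
    have le: "\<mu> m1 j \<le> d - 1"
      using deg[OF m1T] j(1) member_le_sum[of j "{..n}" "\<mu> m1"] by simp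
    hence eq: "\<mu> m1 j = d - 1" using j dq by linarith
    have "(\<Sum>i\<le>n. \<mu> m1 i) = \<mu> m1 j + (\<Sum>i\<in>{..n}-{j}. \<mu> m1 i)"
      using j by (subst sum.remove[of _ j]) auto
    hence "(\<Sum>i\<in>{..n}-{j}. \<mu> m1 i) = 0" using deg[OF m1T] eq by simp
    hence z: "\<mu> m1 i = 0" if "i \<le> n" "i \<noteq> j" for i using that by simp
    have "\<mu> m1 = (\<lambda>i. if i = j then d - 1 else 0)"
    proof
      fix i show "\<mu> m1 i = (if i = j then d - 1 else 0)"
        using z[of i] out[OF m1T, of i] eq by (cases "i \<le> n") auto
    qed
    thus ?thesis using unit_case[where T=T and \<mu>=\<mu> and n=n and e="d-1" and c=c, OF Tfin inj deg out m1T cne[OF m1T] j(1)] by auto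
  qed
  then obtain a where "(\<Sum>m\<in>T. c m * (\<Prod>i\<le>n. a i ^ \<mu> m i)) \<noteq> 0" by blast
  hence "(\<Sum>m\<in>Poly_Mapping.keys F. c m * (\<Prod>i\<le>n. a i ^ \<mu> m i)) \<noteq> 0" by (simp add: sumeq)
  thus ?thesis using kn unfolding c_def \<mu>_def by blast
qed



lemma ev_cong:
  assumes "vars_within F n" "\<And>i. i \<le> n \<Longrightarrow> \<psi> i = \<psi>' i"
  shows "ev \<psi> F = ev \<psi>' F"
  unfolding ev_def mon_def
proof (intro sum.cong refl arg_cong2[where f="(*)"] prod.cong)
  fix m i assume "m \<in> Poly_Mapping.keys F" "i \<in> Poly_Mapping.keys m"
  hence "i \<le> n" using assms(1) unfolding vars_within_def by auto
  thus "\<psi> i ^ Poly_Mapping.lookup m i = \<psi>' i ^ Poly_Mapping.lookup m i" using assms(2) by simp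
qed

lemma sum_lin_poly:
  "(\<Sum>j\<in>S. [:x j:] * [:y j, z j:]) = [:\<Sum>j\<in>S. x j * y j, \<Sum>j\<in>S. x j * z j:]"
  by (induction S rule: infinite_finite_induct) (auto simp: mult.commute)

lemma sum_split01:
  assumes "r \<ge> (1::nat)"
  shows "(\<Sum>j\<le>r. f j) = f 0 + f 1 + (\<Sum>j\<in>{2..r}. f j)"
proof -
  have "{..r} = insert 0 (insert 1 {2..r})" using assms by auto
  thus ?thesis by (simp add: add.assoc)
qed

lemma not_pth_from_point:
  fixes F :: "('a::{finite,field}) mpoly"
  assumes vw: "vars_within F n" and kn: "k \<le> n"
    and ne: "(\<Sum>m\<in>Poly_Mapping.keys F. Poly_Mapping.lookup F m * of_nat (Poly_Mapping.lookup m k) *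
       (\<Prod>i\<le>n. a i ^ (Poly_Mapping.lookup m i - (if i = k then 1 else 0)))) \<noteq> 0"
    and rep: "\<And>i. i \<le> n \<Longrightarrow> (\<Sum>j\<le>r. [:A i j:] * \<phi> j) = [:a i, if i = k then 1 else 0:]"
  shows "\<not> is_pth_power (lin_subst F A r)"
proof
  assume "is_pth_power (lin_subst F A r)"
  then obtain G where G: "lin_subst F A r = G ^ CHAR('a)" unfolding is_pth_power_def by blast
  define U where "U = ev \<phi> (lin_subst F A r)"
  have "U = ev \<phi> G ^ CHAR('a)" unfolding U_def G by (simp add: ev_power)
  hence "pderiv U = 0" by (simp add: pderiv_power of_nat_poly)
  hence "coeff (pderiv U) 0 = 0" by simp
  hence "coeff U 1 = 0" by (simp add: coeff_pderiv)
  moreover have "U = ev (\<lambda>i. [:a i, if i = k then 1 else 0:]) F"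
    unfolding U_def ev_lin_subst by (rule ev_cong[OF vw rep])
  ultimately show False using coeff1_ev[OF vw kn, of a] ne by simp
qed



lemma construct_plane:
  fixes a :: "nat \<Rightarrow> 'a::field"
  assumes n2: "n \<ge> 2" and r1: "1 \<le> r" and rn: "r \<le> n - 1" and kn: "k \<le> n"
  shows "\<exists>A \<phi>. indep_columns A n r \<and>
     (\<forall>i\<le>n. (\<Sum>j\<le>r. [:A i j:] * \<phi> j) = [:a i, if i = k then 1 else 0:])"
proof -
  define m where "m = (if \<exists>i\<le>n. i \<noteq> k \<and> a i \<noteq> 0 then (SOME i. i \<le> n \<and> i \<noteq> k \<and> a i \<noteq> 0)
                       else (if k = 0 then 1 else 0))"
  have mprops: "m \<le> n \<and> m \<noteq> k \<and> (a m = 0 \<longrightarrow> (\<forall>i\<le>n. i \<noteq> k \<longrightarrow> a i = 0))"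
  proof (cases "\<exists>i\<le>n. i \<noteq> k \<and> a i \<noteq> 0")
    case True
    hence "m \<le> n \<and> m \<noteq> k \<and> a m \<noteq> 0" unfolding m_def by simp (rule someI_ex, blast)
    thus ?thesis by simp
  next
    case False thus ?thesis using n2 unfolding m_def by auto
  qed
  hence mn: "m \<le> n" and mk: "m \<noteq> k" and am: "a m = 0 \<Longrightarrow> i \<le> n \<Longrightarrow> i \<noteq> k \<Longrightarrow> a i = 0" for i by auto
  define L where "L = sorted_list_of_set ({..n} - {k, m})"
  have setL: "set L = {..n} - {k, m}" and distL: "distinct L" unfolding L_def by auto
  have "length L = card ({..n} - {k, m})" unfolding L_def by simp
  also have "\<dots> = n - 1" using mn kn mk by (subst card_Diff_subset) auto
  finally have lenL: "length L = n - 1" .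
  define \<sigma> where "\<sigma> j = L ! (j - 2)" for j
  have \<sigma>set: "\<sigma> j \<in> {..n} - {k, m}" if "2 \<le> j" "j \<le> r" for j
  proof -
    have "j - 2 < length L" using that rn lenL by linarith
    hence "L ! (j - 2) \<in> set L" by (rule nth_mem)
    thus ?thesis unfolding \<sigma>_def setL .
  qed
  have \<sigma>inj: "\<sigma> j = \<sigma> j' \<longleftrightarrow> j = j'" if "2 \<le> j" "j \<le> r" "2 \<le> j'" "j' \<le> r" for j j'
  proof -
    have "j - 2 < length L" "j' - 2 < length L" using that rn lenL by linarith+
    thus ?thesis unfolding \<sigma>_def using distL that by (auto simp: nth_eq_iff_index_eq)
  qed
  define A :: "nat \<Rightarrow> nat \<Rightarrow> 'a" where
    "A i j = (if j = 0 then (if i = k then 1 else 0)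
              else if j = 1 then (if a m \<noteq> 0 then a i else (if i = m then 1 else 0))
              else (if i = \<sigma> j then 1 else 0))" for i j
  define b :: "nat \<Rightarrow> 'a" where
    "b j = (if a m \<noteq> 0 then (if j = 1 then 1 else 0) else (if j = 0 then a k else 0))" for j
  define c :: "nat \<Rightarrow> 'a" where "c j = (if j = 0 then 1 else 0)" for j
  define \<phi> where "\<phi> j = [:b j, c j:]" for j
  have rep: "(\<Sum>j\<le>r. [:A i j:] * \<phi> j) = [:a i, if i = k then 1 else 0:]" if "i \<le> n" for i
  proof -
    have "(\<Sum>j\<le>r. [:A i j:] * \<phi> j) = [:\<Sum>j\<le>r. A i j * b j, \<Sum>j\<le>r. A i j * c j:]"
      unfolding \<phi>_def by (rule sum_lin_poly)
    moreover have "(\<Sum>j\<le>r. A i j * c j) = (if i = k then 1 else 0)"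
      using r1 by (subst sum_split01) (auto simp: A_def c_def)
    moreover have "(\<Sum>j\<le>r. A i j * b j) = a i"
      using r1 that am by (subst sum_split01) (auto simp: A_def b_def)
    ultimately show ?thesis by simp
  qed
  have indep: "indep_columns A n r"
    unfolding indep_columns_def
  proof (rule allI, rule impI)
    fix x :: "nat \<Rightarrow> 'a" assume H: "\<forall>i\<le>n. (\<Sum>j\<le>r. A i j * x j) = 0"
    have z2: "(\<Sum>j\<in>{2..r}. A i j * x j) = 0" if "i \<notin> \<sigma> ` {2..r}" for i
      by (rule sum.neutral) (use that in \<open>auto simp: A_def\<close>)
    have "m \<notin> \<sigma> ` {2..r}" "k \<notin> \<sigma> ` {2..r}" using \<sigma>set by fastforce+
    hence zm: "(\<Sum>j\<in>{2..r}. A m j * x j) = 0" and zk: "(\<Sum>j\<in>{2..r}. A k j * x j) = 0" using z2 by auto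
    have "(\<Sum>j\<le>r. A m j * x j) = 0" using H mn by auto
    hence "A m 1 * x 1 = 0" using r1 zm mk by (subst (asm) sum_split01) (auto simp: A_def)
    moreover have "A m 1 \<noteq> 0" by (auto simp: A_def)
    ultimately have x1: "x 1 = 0" by simp
    have "(\<Sum>j\<le>r. A k j * x j) = 0" using H kn by auto
    hence x0: "x 0 = 0" using r1 zk x1 by (subst (asm) sum_split01) (auto simp: A_def)
    have xj: "x j = 0" if "2 \<le> j" "j \<le> r" for j
    proof -
      have sj: "\<sigma> j \<le> n" "\<sigma> j \<noteq> k" "\<sigma> j \<noteq> m" using \<sigma>set[OF that] by auto
      have "(\<Sum>j'\<in>{2..r}. A (\<sigma> j) j' * x j') = (\<Sum>j'\<in>{2..r}. if j' = j then x j' else 0)"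
        by (intro sum.cong refl) (use \<sigma>inj[OF that] in \<open>auto simp: A_def\<close>)
      also have "\<dots> = x j" using that by simp
      finally have "(\<Sum>j'\<in>{2..r}. A (\<sigma> j) j' * x j') = x j" .
      moreover have "(\<Sum>j'\<le>r. A (\<sigma> j) j' * x j') = 0" using H sj by auto
      ultimately show ?thesis using r1 x1 sj by (subst (asm) sum_split01) (auto simp: A_def)
    qed
    show "\<forall>j\<le>r. x j = 0"
    proof (intro allI impI)
      fix j assume "j \<le> r"
      thus "x j = 0" using x0 x1 xj by (cases "j = 0 \<or> j = 1") auto
    qed
  qed
  show ?thesis using indep rep by blast
qed



theorem lemma2p1:
  fixes F :: "('a::{finite,field}) mpoly" and n d :: nat
  assumes "n \<ge> 2"
    and "F \<noteq> 0"
    and "vars_within F n"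
    and "homogeneous F d"
    and "d \<le> CARD('a) + 1"
    and "\<not> is_pth_power F"
  shows "\<forall>r. 1 \<le> r \<and> r \<le> n - 1 \<longrightarrow>
           (\<exists>A :: nat \<Rightarrow> nat \<Rightarrow> 'a. indep_columns A n r \<and>
              lin_subst F A r \<noteq> 0 \<and> \<not> is_pth_power (lin_subst F A r))"
proof (intro allI impI)
  fix r assume r: "1 \<le> r \<and> r \<le> n - 1"
  obtain k a where ka: "k \<le> n" and ne: "(\<Sum>m\<in>Poly_Mapping.keys F. Poly_Mapping.lookup F m * of_nat (Poly_Mapping.lookup m k) *
       (\<Prod>i\<le>n. a i ^ (Poly_Mapping.lookup m i - (if i = k then 1 else 0)))) \<noteq> 0"
    using exists_point[OF assms(3,4,5,6)] by blast
  obtain A \<phi> where A: "indep_columns A n r"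
    and rep: "\<forall>i\<le>n. (\<Sum>j\<le>r. [:A i j:] * \<phi> j) = [:a i, if i = k then 1 else 0:]"
    using construct_plane[OF assms(1) _ _ ka, of r a] r by blast
  have np: "\<not> is_pth_power (lin_subst F A r)"
    by (rule not_pth_from_point[OF assms(3) ka ne]) (use rep in auto)
  have "CHAR('a) > 0" using char_prime[where 'a='a] prime_gt_0_nat by blast
  hence "is_pth_power (0 :: 'a mpoly)" unfolding is_pth_power_def
    by (intro exI[of _ 0]) simp
  hence "lin_subst F A r \<noteq> 0" using np by auto
  thus "\<exists>A :: nat \<Rightarrow> nat \<Rightarrow> 'a. indep_columns A n r \<and>
              lin_subst F A r \<noteq> 0 \<and> \<not> is_pth_power (lin_subst F A r)"
    using A np by blast
qed

end
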